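(* For every $a\ge h^*$, $H\ge h^*$ and $N\ge1$, $$P_a\big[\mathcal A\cap\mathcal C_H\cap\mathcal D_N\big]=0,$$ where $\mathcal A:=\{|\mathcal C_o^{h^*}\cap\mathbb T^+|=\infty\}$, $\mathcal C_H:=\{\Phi_n\le H\text{ for all }n\ge0\}$ and $\mathcal D_N:=\{|Z_n|\le N\text{ for all }n\ge0\}$.
   Context: Let $d\ge 2$ and let $\mathbb T$ be the infinite $(d+1)$-regular tree rooted at $o$, $\bar o$ a fixed neighbour of $o$, $\mathbb T^+:=\{x:\bar o\text{ not on the geodesic from }o\text{ to }x\}$, $d(\cdot,\cdot)$ the graph distance. Let $\phi$ be the Gaussian free field on $\mathbb T$ (centred Gaussian, covariance equal to the Green function $g(x,y)=\frac1{d+1}\mathbb E_x[\sum_{k\ge0}1_{X_k=y}]$ of simple random walk), law $P$, and $P_a:=P[\cdot\mid\phi_o=a]$; equivalently under $P_a$, $\phi_o=a$ and $\phi_x=\frac1d\phi_{\bar x}+Y_x$ for $x\neq o$ ($\bar x$ the parent of $x$ towards $o$, $(Y_x)$ i.i.d. $\mathcal N(0,\frac{d+1}d)$). $\mathcal C_o^h$ is the connected component of $o$ in $\{x:\phi_x\ge h\}$ and $h^*:=\inf\{h:P[|\mathcal C_o^h|=\infty]=0\}$. Set $Z_n:=\{x\in\mathcal C_o^{h^*}\cap\mathbb T^+:d(o,x)=n\}$ and $\Phi_n:=\max_{x\in Z_n}\phi_x$ (with $\max\emptyset=-\infty$). *)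

theory Defs
  imports "HOL-Probability.Probability"
begin

text \<open>Vertices are words: the root o is the empty list; the root has the
d+1 children [i] (i < d+1); every other vertex xs has the d children
xs @ [j] (j < d).  The parent of a non-root vertex xs is butlast xs.\<close>

definition Vert :: "nat \<Rightarrow> nat list set" where
  "Vert d = {xs. xs = [] \<or> (hd xs < d + 1 \<and> (\<forall>i \<in> set (tl xs). i < d))}"

definition root :: "nat list" where "root = []"

definition obar :: "nat \<Rightarrow> nat list" where "obar d = [d]"

definition adj :: "nat \<Rightarrow> nat list \<Rightarrow> nat list \<Rightarrow> bool" where
  "adj d x y \<longleftrightarrow> x \<in> Vert d \<and> y \<in> Vert d \<and>
     ((y \<noteq> [] \<and> x = butlast y) \<or> (x \<noteq> [] \<and> y = butlast x))"

text \<open>Graph distance from the root (the geodesic from o to xs is the chain of prefixes).\<close>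
definition dist_root :: "nat list \<Rightarrow> nat" where "dist_root xs = length xs"

text \<open>T^+: the vertices whose geodesic from o does not pass through obar.\<close>
definition Tplus :: "nat \<Rightarrow> nat list set" where
  "Tplus d = {xs \<in> Vert d. \<not> (take 1 xs = obar d)}"

definition cluster :: "nat \<Rightarrow> (nat list \<Rightarrow> real) \<Rightarrow> real \<Rightarrow> nat list set" where
  "cluster d phi h = {x \<in> Vert d. phi root \<ge> h \<and>
     (root, x) \<in> {(u, v). adj d u v \<and> phi u \<ge> h \<and> phi v \<ge> h}\<^sup>*}"

text \<open>i.i.d. N(0,(d+1)/d) variables Y_x indexed by the non-root vertices
(normal_density takes the standard deviation).\<close>
definition Yspace :: "nat \<Rightarrow> (nat list \<Rightarrow> real) measure" where
  "Yspace d = (\<Pi>\<^sub>M x \<in> Vert d - {root}.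
      density lborel (normal_density 0 (sqrt ((real d + 1) / real d))))"

text \<open>field_rev a Y rs is the field at the vertex rev rs, given phi_o = a:
phi_o = a, phi_x = phi_(parent x) / d + Y_x.\<close>
fun field_rev :: "nat \<Rightarrow> real \<Rightarrow> (nat list \<Rightarrow> real) \<Rightarrow> nat list \<Rightarrow> real" where
  "field_rev d a Y [] = a"
| "field_rev d a Y (r # rs) = field_rev d a Y rs / real d + Y (rev (r # rs))"

definition field :: "nat \<Rightarrow> real \<Rightarrow> (nat list \<Rightarrow> real) \<Rightarrow> nat list \<Rightarrow> real" where
  "field d a Y xs = field_rev d a Y (rev xs)"

text \<open>P_a as a measure on the driving noise; an event E (a predicate on field
configurations) has P_a-probability zero iff it is a null set of the
(completed) probability space.\<close>
definition Pa_null :: "nat \<Rightarrow> real \<Rightarrow> ((nat list \<Rightarrow> real) \<Rightarrow> bool) \<Rightarrow> bool" where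
  "Pa_null d a E \<longleftrightarrow>
     {Y \<in> space (Yspace d). E (field d a Y)} \<in> null_sets (completion (Yspace d))"

text \<open>The unconditioned law P: phi_o ~ N(0, g(o,o)) independent of the Y's.
The variance g(o,o) = d/(d-1) is the one forced by the recursion
(Var phi_x = Var phi_o for all x, by automorphism invariance).\<close>
definition Pspace :: "nat \<Rightarrow> (real \<times> (nat list \<Rightarrow> real)) measure" where
  "Pspace d = density lborel (normal_density 0 (sqrt (real d / (real d - 1))))
               \<Otimes>\<^sub>M Yspace d"

definition P_null :: "nat \<Rightarrow> ((nat list \<Rightarrow> real) \<Rightarrow> bool) \<Rightarrow> bool" where
  "P_null d E \<longleftrightarrow>
     {w \<in> space (Pspace d). E (field d (fst w) (snd w))} \<in> null_sets (completion (Pspace d))"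

definition hstar :: "nat \<Rightarrow> real" where
  "hstar d = Inf {h. P_null d (\<lambda>phi. infinite (cluster d phi h))}"

definition Zn :: "nat \<Rightarrow> (nat list \<Rightarrow> real) \<Rightarrow> nat \<Rightarrow> nat list set" where
  "Zn d phi n = {x \<in> cluster d phi (hstar d) \<inter> Tplus d. dist_root x = n}"

text \<open>Phi_n = max of phi over Z_n, with max of the empty set = -infinity.\<close>
definition Phin :: "nat \<Rightarrow> (nat list \<Rightarrow> real) \<Rightarrow> nat \<Rightarrow> ereal" where
  "Phin d phi n = Sup ((\<lambda>x. ereal (phi x)) ` Zn d phi n)"

definition eventA :: "nat \<Rightarrow> (nat list \<Rightarrow> real) \<Rightarrow> bool" where
  "eventA d phi \<longleftrightarrow> infinite (cluster d phi (hstar d) \<inter> Tplus d)"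

definition eventC :: "nat \<Rightarrow> real \<Rightarrow> (nat list \<Rightarrow> real) \<Rightarrow> bool" where
  "eventC d H phi \<longleftrightarrow> (\<forall>n. Phin d phi n \<le> ereal H)"

definition eventD :: "nat \<Rightarrow> nat \<Rightarrow> (nat list \<Rightarrow> real) \<Rightarrow> bool" where
  "eventD d N phi \<longleftrightarrow> (\<forall>n. card (Zn d phi n) \<le> N)"

end

theory Submission
  imports Defs
begin

lemma Vert_snoc: "y @ [c] \<in> Vert d \<Longrightarrow> y \<in> Vert d"
  unfolding Vert_def by (cases y) auto

lemma Vert_take: "z \<in> Vert d \<Longrightarrow> take k z \<in> Vert d"
  unfolding Vert_def
  by (cases z; cases k) (auto dest: in_set_takeD)

lemma field_snoc: "field d a x (z @ [c]) = field d a x z / real d + x (z @ [c])"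
  by (simp add: field_def)

lemma field_Nil: "field d a x [] = a"
  by (simp add: field_def)

lemma field_rev_agree:
  "(\<And>j. j < length rs \<Longrightarrow> x (rev (drop j rs)) = y (rev (drop j rs))) \<Longrightarrow>
   field_rev d a x rs = field_rev d a y rs"
proof (induction rs)
  case Nil then show ?case by simp
next
  case (Cons r rs)
  have "field_rev d a x rs = field_rev d a y rs"
    using Cons.prems[of "Suc _"] by (intro Cons.IH) auto
  moreover have "x (rev (r # rs)) = y (rev (r # rs))" using Cons.prems[of 0] by simp
  ultimately show ?case by simp
qed

lemma field_agree:
  "(\<And>k. 1 \<le> k \<Longrightarrow> k \<le> length z \<Longrightarrow> x (take k z) = y (take k z)) \<Longrightarrow>
   field d a x z = field d a y z"
  unfolding field_def
proof (rule field_rev_agree)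
  fix j assume a: "\<And>k. 1 \<le> k \<Longrightarrow> k \<le> length z \<Longrightarrow> x (take k z) = y (take k z)"
    and j: "j < length (rev z)"
  have "rev (drop j (rev z)) = take (length z - j) z"
    by (simp add: rev_drop)
  then show "x (rev (drop j (rev z))) = y (rev (drop j (rev z)))" using a[of "length z - j"] j by simp
qed

definition good :: "nat \<Rightarrow> real \<Rightarrow> real \<Rightarrow> (nat list \<Rightarrow> real) \<Rightarrow> nat list \<Rightarrow> bool" where
  "good d a h x z \<longleftrightarrow> (\<forall>k \<le> length z. field d a x (take k z) \<ge> h)"

lemma cluster_iff:
  assumes "z \<in> Vert d"
  shows "z \<in> cluster d phi h \<longleftrightarrow> (\<forall>k \<le> length z. phi (take k z) \<ge> h)"
proof
  let ?R = "{(u, v). adj d u v \<and> phi u \<ge> h \<and> phi v \<ge> h}"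
  assume "z \<in> cluster d phi h"
  then have r: "(root, z) \<in> ?R\<^sup>*" and r0: "phi root \<ge> h" by (auto simp: cluster_def)
  show "\<forall>k \<le> length z. phi (take k z) \<ge> h"
    using r
  proof (induction rule: rtrancl_induct)
    case base then show ?case using r0 by (simp add: root_def)
  next
    case (step u v)
    then have uv: "adj d u v" "phi v \<ge> h" by auto
    show ?case
    proof (intro allI impI)
      fix k assume k: "k \<le> length v"
      show "h \<le> phi (take k v)"
      proof (cases "k = length v")
        case True then show ?thesis using uv by simp
      next
        case False
        from uv(1) consider "v \<noteq> [] \<and> u = butlast v" | "u \<noteq> [] \<and> v = butlast u"
          unfolding adj_def by blast
        then show ?thesis
        proof cases
          case 1
          then have "take k v = take k u" using False k by (simp add: take_butlast)
          then show ?thesis using step.IH 1 False k by auto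
        next
          case 2
          then have "take k v = take k u" using k by (cases u rule: rev_cases) auto
          then show ?thesis using step.IH 2 k by auto
        qed
      qed
    qed
  qed
next
  let ?R = "{(u, v). adj d u v \<and> phi u \<ge> h \<and> phi v \<ge> h}"
  assume a: "\<forall>k \<le> length z. phi (take k z) \<ge> h"
  have "(root, z) \<in> ?R\<^sup>*" using assms a
  proof (induction z rule: rev_induct)
    case Nil then show ?case by (simp add: root_def)
  next
    case (snoc c y)
    have yV: "y \<in> Vert d" using snoc.prems Vert_snoc by blast
    have "\<forall>k \<le> length y. phi (take k y) \<ge> h"
    proof (intro allI impI)
      fix k assume "k \<le> length y"
      then have "take k (y @ [c]) = take k y" by simp
      then show "phi (take k y) \<ge> h" using snoc.prems(2)[rule_format, of k] \<open>k \<le> length y\<close> by simp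
    qed
    then have "(root, y) \<in> ?R\<^sup>*" using snoc.IH yV by blast
    moreover have "phi y \<ge> h" using snoc.prems(2)[rule_format, of "length y"] by simp
    moreover have "phi (y @ [c]) \<ge> h" using snoc.prems(2)[rule_format, of "length y + 1"] by simp
    moreover have "adj d y (y @ [c])" using yV snoc.prems(1) by (simp add: adj_def)
    ultimately show ?case by (simp add: rtrancl.rtrancl_into_rtrancl)
  qed
  moreover have "phi root \<ge> h" using a[rule_format, of 0] by (simp add: root_def)
  ultimately show "z \<in> cluster d phi h" using assms by (simp add: cluster_def)
qed

definition Lev :: "nat \<Rightarrow> nat \<Rightarrow> nat list set" where
  "Lev d k = {z \<in> Vert d. length z = k}"

definition Zp :: "nat \<Rightarrow> real \<Rightarrow> real \<Rightarrow> (nat list \<Rightarrow> real) \<Rightarrow> nat \<Rightarrow> nat list set" where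
  "Zp d a h x k = {z \<in> Lev d k \<inter> Tplus d. good d a h x z}"

definition Bev :: "nat \<Rightarrow> real \<Rightarrow> real \<Rightarrow> real \<Rightarrow> nat \<Rightarrow> nat \<Rightarrow> (nat list \<Rightarrow> real) \<Rightarrow> bool" where
  "Bev d a h H N n x \<longleftrightarrow> (\<forall>k\<le>n. Zp d a h x k \<noteq> {} \<and> card (Zp d a h x k) \<le> N \<and>
      (\<forall>z\<in>Zp d a h x k. field d a x z \<le> H))"

definition agree :: "nat \<Rightarrow> nat \<Rightarrow> (nat list \<Rightarrow> real) \<Rightarrow> (nat list \<Rightarrow> real) \<Rightarrow> bool" where
  "agree d n x y \<longleftrightarrow> (\<forall>z\<in>Vert d. 1 \<le> length z \<and> length z \<le> n \<longrightarrow> x z = y z)"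

lemma field_agree2:
  assumes "agree d n x y" "z \<in> Vert d" "length z \<le> n"
  shows "field d a x z = field d a y z"
  by (rule field_agree) (use assms Vert_take in \<open>auto simp: agree_def\<close>)

lemma good_agree:
  assumes "agree d n x y" "z \<in> Vert d" "length z \<le> n"
  shows "good d a h x z = good d a h y z"
  unfolding good_def using field_agree2[OF assms(1) Vert_take[OF assms(2)]] assms(3)
  by (metis (no_types, lifting) dual_order.trans length_take min.cobounded2)

lemma Zp_agree:
  assumes "agree d n x y" "k \<le> n"
  shows "Zp d a h x k = Zp d a h y k"
  unfolding Zp_def Lev_def using good_agree[OF assms(1)] assms(2) by auto

lemma Bev_agree:
  assumes "agree d n x y" "m \<le> n"
  shows "Bev d a h H N m x = Bev d a h H N m y"
proof -
  have "\<And>k. k \<le> m \<Longrightarrow> Zp d a h x k = Zp d a h y k" using Zp_agree[OF assms(1)] assms(2) by auto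
  moreover have "\<And>k z. k \<le> m \<Longrightarrow> z \<in> Zp d a h x k \<Longrightarrow> field d a x z = field d a y z"
    using field_agree2[OF assms(1)] assms(2) by (auto simp: Zp_def Lev_def)
  ultimately show ?thesis unfolding Bev_def by (metis (no_types, lifting))
qed

lemma Bev_mono: "Bev d a h H N n x \<Longrightarrow> m \<le> n \<Longrightarrow> Bev d a h H N m x"
  unfolding Bev_def by (meson order_trans)

lemma finite_Lev: "finite (Lev d k)"
proof -
  have "Lev d k \<subseteq> {xs. set xs \<subseteq> {..d} \<and> length xs = k}"
  proof
    fix z assume "z \<in> Lev d k"
    then have "z \<in> Vert d" "length z = k" by (auto simp: Lev_def)
    then show "z \<in> {xs. set xs \<subseteq> {..d} \<and> length xs = k}"
      unfolding Vert_def by (cases z) auto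
  qed
  then show ?thesis using finite_lists_length_eq[of "{..d}" k] finite_subset by auto
qed

lemma root_Tplus: "[] \<in> Tplus d"
  by (simp add: Tplus_def Vert_def obar_def)

lemma Zn_eq: "Zn d (field d a Y) k = Zp d a (hstar d) Y k"
  unfolding Zn_def Zp_def Lev_def good_def dist_root_def Tplus_def
  using cluster_iff by auto

lemma events_Bev:
  assumes "eventA d (field d a Y)" "eventC d H (field d a Y)" "eventD d N (field d a Y)"
  shows "Bev d a (hstar d) H N n Y"
  unfolding Bev_def
proof (intro allI impI conjI)
  fix k assume "k \<le> n"
  show "Zp d a (hstar d) Y k \<noteq> {}"
  proof
    assume e: "Zp d a (hstar d) Y k = {}"
    have "cluster d (field d a Y) (hstar d) \<inter> Tplus d \<subseteq> (\<Union>j<k. Lev d j)"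
    proof
      fix z assume z: "z \<in> cluster d (field d a Y) (hstar d) \<inter> Tplus d"
      then have zV: "z \<in> Vert d" by (auto simp: cluster_def)
      have zg: "good d a (hstar d) Y z" using z zV cluster_iff unfolding good_def by blast
      show "z \<in> (\<Union>j<k. Lev d j)"
      proof (rule ccontr)
        assume "z \<notin> (\<Union>j<k. Lev d j)"
        then have kz: "k \<le> length z" using zV by (auto simp: Lev_def)
        have "take k z \<in> Lev d k" using Vert_take[OF zV] kz by (auto simp: Lev_def)
        moreover have "take k z \<in> Tplus d"
        proof (cases k)
          case 0 then show ?thesis using root_Tplus by simp
        next
          case (Suc k')
          then have "take 1 (take k z) = take 1 z" by simp
          then show ?thesis using z Vert_take[OF zV] by (auto simp: Tplus_def)
        qed
        moreover have "good d a (hstar d) Y (take k z)"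
          using zg kz unfolding good_def by (auto simp: min_def)
        ultimately show False using e by (auto simp: Zp_def)
      qed
    qed
    moreover have "finite (\<Union>j<k. Lev d j)" using finite_Lev by auto
    ultimately show False using assms(1) unfolding eventA_def using finite_subset by blast
  qed
  show "card (Zp d a (hstar d) Y k) \<le> N"
    using assms(3) by (simp add: eventD_def Zn_eq)
  show "\<forall>z\<in>Zp d a (hstar d) Y k. field d a Y z \<le> H"
  proof
    fix z assume "z \<in> Zp d a (hstar d) Y k"
    then have "ereal (field d a Y z) \<le> Phin d (field d a Y) k"
      unfolding Phin_def Zn_eq by (auto intro: Sup_upper)
    also have "\<dots> \<le> ereal H" using assms(2) by (simp add: eventC_def)
    finally show "field d a Y z \<le> H" by simp
  qed
qed

definition Mn :: "nat \<Rightarrow> real measure" where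
  "Mn d = density lborel (normal_density 0 (sqrt ((real d + 1) / real d)))"

definition Jn :: "nat \<Rightarrow> nat \<Rightarrow> nat list set" where
  "Jn d n = {z \<in> Vert d. 1 \<le> length z \<and> length z \<le> n}"

lemma prob_Mn: "d > 0 \<Longrightarrow> prob_space (Mn d)"
  unfolding Mn_def by (rule prob_space_normal_density) auto

lemma sets_Mn[simp, measurable_cong]: "sets (Mn d) = sets borel"
  unfolding Mn_def by simp

lemma space_Mn[simp]: "space (Mn d) = UNIV"
  unfolding Mn_def by simp

lemma finite_Jn: "finite (Jn d n)"
proof -
  have "Jn d n \<subseteq> (\<Union>k\<le>n. Lev d k)"
  proof
    fix z assume "z \<in> Jn d n"
    then have "z \<in> Lev d (length z)" "length z \<in> {..n}" by (auto simp: Jn_def Lev_def)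
    then show "z \<in> (\<Union>k\<le>n. Lev d k)" by blast
  qed
  moreover have "finite (\<Union>k\<le>n. Lev d k)" using finite_Lev by simp
    ultimately show ?thesis by (rule finite_subset)
qed

lemma Jn_sub: "Jn d n \<subseteq> Vert d - {root}"
  by (auto simp: Jn_def root_def)

lemma Jn_Suc: "Jn d (Suc n) = Jn d n \<union> Lev d (Suc n)"
  by (auto simp: Jn_def Lev_def)

lemma Jn_disj: "Jn d n \<inter> Lev d (Suc n) = {}"
  by (auto simp: Jn_def Lev_def)

lemma field_meas:
  "z \<in> Vert d \<Longrightarrow> length z \<le> n \<Longrightarrow>
   (\<lambda>x. field d a x z) \<in> borel_measurable (PiM (Jn d n) (\<lambda>_. Mn d))"
proof (induction z rule: rev_induct)
  case Nil then show ?case by (simp add: field_Nil)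
next
  case (snoc c y)
  have yV: "y \<in> Vert d" using snoc.prems Vert_snoc by blast
  have 1: "(\<lambda>x. field d a x y) \<in> borel_measurable (PiM (Jn d n) (\<lambda>_. Mn d))"
    using snoc yV by simp
  have "y @ [c] \<in> Jn d n" using snoc.prems by (auto simp: Jn_def)
  then have 2: "(\<lambda>x. x (y @ [c])) \<in> borel_measurable (PiM (Jn d n) (\<lambda>_. Mn d))"
    by measurable
  show ?case unfolding field_snoc using 1 2 by measurable
qed

lemma finite_pred_sets:
  assumes F: "finite F" and sub: "\<And>x. x \<in> space M \<Longrightarrow> f x \<subseteq> F"
    and m: "\<And>z. z \<in> F \<Longrightarrow> {x \<in> space M. z \<in> f x} \<in> sets M"
  shows "{x \<in> space M. P (f x)} \<in> sets M"
proof -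
  have iff: "{x \<in> space M. z \<in> f x \<longleftrightarrow> z \<in> S} \<in> sets M" if "z \<in> F" for z S
  proof (cases "z \<in> S")
    case True then show ?thesis using m[OF that] by simp
  next
    case False
    have "{x \<in> space M. z \<in> f x \<longleftrightarrow> z \<in> S} = space M - {x \<in> space M. z \<in> f x}"
      using False by blast
    then show ?thesis using m[OF that] by (metis sets.compl_sets)
  qed
  have e: "{x \<in> space M. P (f x)} = {x \<in> space M. \<exists>S\<in>{S. S \<subseteq> F \<and> P S}. \<forall>z\<in>F. (z \<in> f x \<longleftrightarrow> z \<in> S)}"
  proof (intro set_eqI iffI)
    fix x assume "x \<in> {x \<in> space M. P (f x)}"
    then show "x \<in> {x \<in> space M. \<exists>S\<in>{S. S \<subseteq> F \<and> P S}. \<forall>z\<in>F. (z \<in> f x \<longleftrightarrow> z \<in> S)}"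
      using sub by blast
  next
    fix x assume x: "x \<in> {x \<in> space M. \<exists>S\<in>{S. S \<subseteq> F \<and> P S}. \<forall>z\<in>F. (z \<in> f x \<longleftrightarrow> z \<in> S)}"
    then obtain S where S: "S \<subseteq> F" "P S" "\<forall>z\<in>F. (z \<in> f x \<longleftrightarrow> z \<in> S)" and xs: "x \<in> space M" by blast
    have "f x = S" using S sub[OF xs] by blast
    then show "x \<in> {x \<in> space M. P (f x)}" using S xs by simp
  qed
  have "finite {S. S \<subseteq> F \<and> P S}" using F by simp
  then show ?thesis unfolding e
    by (intro sets.sets_Collect_finite_Ex sets.sets_Collect_finite_All iff F) auto
qed

lemma Bev_sets:
  "{x \<in> space (PiM (Jn d n) (\<lambda>_. Mn d)). Bev d a h H N n x} \<in> sets (PiM (Jn d n) (\<lambda>_. Mn d))"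
proof -
  let ?M = "PiM (Jn d n) (\<lambda>_. Mn d)"
  define U where "U = {z \<in> Vert d. length z \<le> n}"
  define f where "f x = {(z, True) | z. z \<in> U \<and> good d a h x z} \<union>
      {(z, False) | z. z \<in> U \<and> field d a x z \<le> H}" for x
  define Zs where "Zs S k = {z \<in> Lev d k \<inter> Tplus d. (z, True) \<in> S}" for S k
  define Q where "Q S = (\<forall>k\<le>n. Zs S k \<noteq> {} \<and> card (Zs S k) \<le> N \<and> (\<forall>z\<in>Zs S k. (z, False) \<in> S))" for S
  have U: "finite U"
  proof -
    have "U \<subseteq> (\<Union>k\<le>n. Lev d k)"
    proof
      fix z assume "z \<in> U"
      then have "z \<in> Lev d (length z)" "length z \<in> {..n}" by (auto simp: U_def Lev_def)
      then show "z \<in> (\<Union>k\<le>n. Lev d k)" by blast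
    qed
    moreover have "finite (\<Union>k\<le>n. Lev d k)" using finite_Lev by simp
    ultimately show ?thesis by (rule finite_subset)
  qed
  have Zs: "Zs (f x) k = Zp d a h x k" if "k \<le> n" for x k
    using that by (auto simp: Zs_def f_def Zp_def U_def Lev_def)
  have "Bev d a h H N n x = Q (f x)" for x
  proof -
    have 2: "\<And>k z. k \<le> n \<Longrightarrow> z \<in> Zp d a h x k \<Longrightarrow> ((z,False) \<in> f x \<longleftrightarrow> field d a x z \<le> H)"
      by (auto simp: f_def Zp_def U_def Lev_def)
    show ?thesis unfolding Bev_def Q_def using Zs[of _ x] 2 by simp
  qed
  then have eq: "{x \<in> space ?M. Bev d a h H N n x} = {x \<in> space ?M. Q (f x)}" by simp
  have gm: "{x \<in> space ?M. good d a h x z} \<in> sets ?M" if "z \<in> U" for z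
  proof -
    have "\<And>k. (\<lambda>x. field d a x (take k z)) \<in> borel_measurable ?M"
      using that Vert_take by (intro field_meas) (auto simp: U_def)
    then have "\<And>k. {x \<in> space ?M. h \<le> field d a x (take k z)} \<in> sets ?M" by measurable
    moreover have "{x \<in> space ?M. good d a h x z} = space ?M \<inter> (\<Inter>k\<in>{..length z}. {x \<in> space ?M. h \<le> field d a x (take k z)})"
      unfolding good_def by auto
    ultimately show ?thesis by auto
  qed
  have hm: "{x \<in> space ?M. field d a x z \<le> H} \<in> sets ?M" if "z \<in> U" for z
  proof -
    have "(\<lambda>x. field d a x z) \<in> borel_measurable ?M"
      using that by (intro field_meas) (auto simp: U_def)
    then show ?thesis by measurable
  qed
  show ?thesis unfolding eq
  proof (rule finite_pred_sets[where F = "U \<times> UNIV"])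
    show "finite (U \<times> (UNIV :: bool set))" using U by simp
    show "f x \<subseteq> U \<times> UNIV" for x by (auto simp: f_def)
    fix p assume "p \<in> U \<times> (UNIV :: bool set)"
    then obtain z b where p: "p = (z, b)" "z \<in> U" by auto
    show "{x \<in> space ?M. p \<in> f x} \<in> sets ?M"
    proof (cases b)
      case True
      then have "{x \<in> space ?M. p \<in> f x} = {x \<in> space ?M. good d a h x z}" using p by (auto simp: f_def)
      then show ?thesis using gm p by simp
    next
      case False
      then have "{x \<in> space ?M. p \<in> f x} = {x \<in> space ?M. field d a x z \<le> H}" using p by (auto simp: f_def)
      then show ?thesis using hm p by simp
    qed
  qed
qed

lemma q_pos:
  assumes s: "\<sigma> > 0"
  shows "measure (density lborel (normal_density 0 \<sigma>)) {..<t} > 0"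
proof -
  let ?M = "density lborel (normal_density 0 \<sigma>)"
  interpret prob_space ?M by (rule prob_space_normal_density) (rule s)
  have "emeasure ?M {..<t} \<noteq> 0"
  proof
    assume "emeasure ?M {..<t} = 0"
    then have "(\<integral>\<^sup>+ x. ennreal (normal_density 0 \<sigma> x) * indicator {..<t} x \<partial>lborel) = 0"
      by (subst (asm) emeasure_density) auto
    then have "AE x in lborel. ennreal (normal_density 0 \<sigma> x) * indicator {..<t} x = 0"
      by (subst (asm) nn_integral_0_iff_AE) auto
    then have "AE x in lborel. x \<notin> {..<t}"
    proof eventually_elim
      fix x assume h: "ennreal (normal_density 0 \<sigma> x) * indicator {..<t} x = 0"
      show "x \<notin> {..<t}"
      proof
        assume "x \<in> {..<t}"
        then have "ennreal (normal_density 0 \<sigma> x) = 0" using h by simp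
        then show False using normal_density_pos[OF s, of 0 x] by simp
      qed
    qed
    then have "emeasure lborel {..<t} = 0"
      by (subst (asm) AE_iff_measurable[of "{..<t}"]) auto
    moreover have "emeasure lborel {t - 1<..<t} \<le> emeasure lborel {..<t}"
      by (rule emeasure_mono) auto
    ultimately show False by simp
  qed
  then show ?thesis by (simp add: emeasure_eq_measure zero_less_measure_iff)
qed

lemma last_le: "c \<in> Vert d \<Longrightarrow> c \<noteq> [] \<Longrightarrow> last c \<le> d"
  unfolding Vert_def by (cases c) (auto, metis last_in_set less_imp_le_nat)

lemma Tplus_snoc: "z @ [c] \<in> Tplus d \<Longrightarrow> z \<in> Tplus d"
proof -
  assume a: "z @ [c] \<in> Tplus d"
  then have zV: "z \<in> Vert d" using Vert_snoc by (auto simp: Tplus_def)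
  show ?thesis
  proof (cases z)
    case Nil then show ?thesis using root_Tplus by simp
  next
    case (Cons u us)
    then have "take 1 (z @ [c]) = take 1 z" by simp
    then show ?thesis using a zV by (auto simp: Tplus_def)
  qed
qed

lemma card_children:
  assumes "finite Z"
  shows "card {c \<in> Lev d (Suc n). butlast c \<in> Z} \<le> (d + 1) * card Z"
proof -
  have "{c \<in> Lev d (Suc n). butlast c \<in> Z} \<subseteq> (\<lambda>(p, i). p @ [i]) ` (Z \<times> {..d})"
  proof
    fix c assume c: "c \<in> {c \<in> Lev d (Suc n). butlast c \<in> Z}"
    then have cV: "c \<in> Vert d" "c \<noteq> []" by (auto simp: Lev_def)
    then have "c = butlast c @ [last c]" by simp
    moreover have "last c \<le> d" using last_le cV by blast
    ultimately show "c \<in> (\<lambda>(p, i). p @ [i]) ` (Z \<times> {..d})" using c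
      by (metis (no_types, lifting) SigmaI atMost_iff case_prod_conv image_eqI mem_Collect_eq)
  qed
  then have "card {c \<in> Lev d (Suc n). butlast c \<in> Z} \<le> card ((\<lambda>(p, i). p @ [i]) ` (Z \<times> {..d}))"
    using assms by (intro card_mono) auto
  also have "\<dots> \<le> card (Z \<times> {..d})" by (rule card_image_le) (use assms in auto)
  also have "\<dots> = (d + 1) * card Z" by (simp add: card_cartesian_product)
  finally show ?thesis .
qed

lemma agree_merge:
  "agree d n (merge (Jn d n) (Lev d (Suc n)) (x, y)) x"
  unfolding agree_def using Jn_disj by (auto simp: Jn_def)

lemma X_bound:
  fixes d N :: nat and a h H :: real
  assumes d: "d > 0"
  defines "\<delta> \<equiv> measure (Mn d) {..<h - H / real d} ^ ((d + 1) * N)"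
  shows "emeasure (PiM (Jn d n) (\<lambda>_. Mn d))
           {x \<in> space (PiM (Jn d n) (\<lambda>_. Mn d)). Bev d a h H N n x} \<le> ennreal ((1 - \<delta>) ^ n)"
proof (induction n)
  case 0
  interpret P0: prob_space "PiM (Jn d 0) (\<lambda>_. Mn d)" by (rule prob_space_PiM) (simp add: prob_Mn d)
  show ?case using P0.emeasure_le_1 by simp
next
  case (Suc n)
  let ?t = "h - H / real d"
  let ?q = "measure (Mn d) {..<?t}"
  let ?P = "PiM (Jn d n) (\<lambda>_. Mn d)"
  let ?L = "PiM (Lev d (Suc n)) (\<lambda>_. Mn d)"
  let ?Q = "PiM (Jn d (Suc n)) (\<lambda>_. Mn d)"
  let ?m = "merge (Jn d n) (Lev d (Suc n))"
  define Xn where "Xn = {x \<in> space ?P. Bev d a h H N n x}"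
  define XS where "XS = {x \<in> space ?Q. Bev d a h H N (Suc n) x}"
  interpret PS: product_sigma_finite "\<lambda>_::nat list. Mn d"
    by (simp add: product_sigma_finite_def prob_space_imp_sigma_finite prob_Mn d)
  interpret L: prob_space ?L by (rule prob_space_PiM) (simp add: prob_Mn d)
  interpret Mnp: prob_space "Mn d" by (rule prob_Mn[OF d])
  have sig: "sqrt ((real d + 1) / real d) > 0" using d by simp
  have qpos: "?q > 0" unfolding Mn_def by (rule q_pos[OF sig])
  have qle: "?q \<le> 1" by (rule Mnp.prob_le_1)
  have dl: "0 \<le> \<delta>" "\<delta> \<le> 1" unfolding \<delta>_def using qpos qle by (auto intro: power_le_one)
  have Qeq: "?Q = distr (?P \<Otimes>\<^sub>M ?L) ?Q ?m"
    using PS.distr_merge[OF Jn_disj[of d n] finite_Jn[of d n] finite_Lev[of d "Suc n"]] Jn_Suc[of d n] by simp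
  have mm: "?m \<in> measurable (?P \<Otimes>\<^sub>M ?L) ?Q"
    using measurable_merge[of "Jn d n" "Lev d (Suc n)" "\<lambda>_. Mn d"] Jn_Suc[of d n] by simp
  have XSs: "XS \<in> sets ?Q" unfolding XS_def by (rule Bev_sets)
  have Xns: "Xn \<in> sets ?P" unfolding Xn_def by (rule Bev_sets)
  define A where "A = ?m -` XS \<inter> space (?P \<Otimes>\<^sub>M ?L)"
  have As: "A \<in> sets (?P \<Otimes>\<^sub>M ?L)" unfolding A_def using measurable_sets[OF mm XSs] .
  have pw: "emeasure ?L (Pair x -` A) \<le> ennreal (1 - \<delta>) * indicator Xn x" if x: "x \<in> space ?P" for x
  proof (cases "Bev d a h H N n x")
    case False
    have "Pair x -` A = {}"
    proof (rule ccontr)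
      assume "Pair x -` A \<noteq> {}"
      then obtain y where "(x, y) \<in> A" by auto
      then have "?m (x, y) \<in> XS" unfolding A_def by blast
      then have "Bev d a h H N (Suc n) (?m (x, y))" unfolding XS_def by blast
      then have "Bev d a h H N n (?m (x, y))" by (rule Bev_mono) simp
      moreover have "Bev d a h H N n (?m (x, y)) = Bev d a h H N n x"
        by (rule Bev_agree[OF agree_merge[of d n x y] le_refl])
      ultimately show False using False by blast
    qed
    then show ?thesis by (simp only: emeasure_empty) simp
  next
    case True
    have xX: "x \<in> Xn" using x True by (simp add: Xn_def)
    define C where "C = {c \<in> Lev d (Suc n). butlast c \<in> Zp d a h x n}"
    define B where "B c = (if c \<in> C then {..<?t} else (UNIV :: real set))" for c
    have CL: "C \<subseteq> Lev d (Suc n)" by (auto simp: C_def)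
    have finZ: "finite (Zp d a h x n)"
      by (rule finite_subset[OF _ finite_Lev[of d n]]) (auto simp: Zp_def)
    have cardZ: "card (Zp d a h x n) \<le> N" using True by (simp add: Bev_def)
    have cardC: "card C \<le> (d + 1) * N"
      using card_children[OF finZ, of d n] cardZ unfolding C_def
      by (meson le_trans mult_le_mono2)
    have Bs: "PiE (Lev d (Suc n)) B \<in> sets ?L"
      by (rule sets_PiM_I_finite) (auto simp: B_def finite_Lev)
    have "emeasure ?L (PiE (Lev d (Suc n)) B) = (\<Prod>c\<in>Lev d (Suc n). emeasure (Mn d) (B c))"
      by (rule PS.emeasure_PiM) (auto simp: B_def finite_Lev)
    also have "\<dots> = (\<Prod>c\<in>Lev d (Suc n). if c \<in> C then ennreal ?q else 1)"
      by (intro prod.cong) (auto simp: B_def Mnp.emeasure_eq_measure Mnp.prob_space[unfolded space_Mn])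
    also have "\<dots> = ennreal ?q ^ card C"
      using CL finite_Lev[of d "Suc n"] by (simp add: prod.If_cases Int_absorb1 Int_absorb2 Collect_mem_eq)
    finally have "ennreal (L.prob (PiE (Lev d (Suc n)) B)) = ennreal (?q ^ card C)"
      by (simp add: L.emeasure_eq_measure ennreal_power measure_nonneg)
    then have Bm: "L.prob (PiE (Lev d (Suc n)) B) = ?q ^ card C"
      by (subst (asm) ennreal_inj) (auto simp: measure_nonneg)
    have sub: "Pair x -` A \<subseteq> space ?L - PiE (Lev d (Suc n)) B"
    proof
      fix y assume "y \<in> Pair x -` A"
      then have xyA: "(x, y) \<in> A" by simp
      then have xy: "(x, y) \<in> space (?P \<Otimes>\<^sub>M ?L)" and "?m (x, y) \<in> XS"
        unfolding A_def by blast+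
      then have B1: "Bev d a h H N (Suc n) (?m (x, y))" unfolding XS_def by blast
      have yL: "y \<in> space ?L" using xy by (simp add: space_pair_measure)
      let ?my = "?m (x, y)"
      have "Zp d a h ?my (Suc n) \<noteq> {}" using B1 by (simp add: Bev_def)
      then obtain z where z: "z \<in> Lev d (Suc n)" "z \<in> Tplus d" "good d a h ?my z"
        by (auto simp: Zp_def)
      have zne: "z \<noteq> []" using z(1) by (auto simp: Lev_def)
      obtain z' c where zz: "z = z' @ [c]" using zne rev_exhaust by blast
      have zL: "z' @ [c] \<in> Lev d (Suc n)" using z(1) unfolding zz .
      have zT: "z' @ [c] \<in> Tplus d" using z(2) unfolding zz .
      have zg: "good d a h ?my (z' @ [c])" using z(3) unfolding zz .
      have z'V: "z' \<in> Vert d" using zL Vert_snoc[of z' c d] by (simp add: Lev_def)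
      have z'len: "length z' = n" using zL by (simp add: Lev_def)
      have z'T: "z' \<in> Tplus d" using Tplus_snoc[OF zT] .
      have gz': "good d a h ?my z'" unfolding good_def
      proof (intro allI impI)
        fix k assume k: "k \<le> length z'"
        then have "take k (z' @ [c]) = take k z'" by simp
        then show "h \<le> field d a ?my (take k z')" using zg k unfolding good_def
          by (metis le_SucI length_append_singleton)
      qed
      have agr: "agree d n ?my x" by (rule agree_merge)
      have "good d a h x z'" using good_agree[OF agr z'V] z'len gz' by simp
      then have z'Z: "z' \<in> Zp d a h x n" using z'V z'len z'T by (simp add: Zp_def Lev_def)
      then have zC: "z' @ [c] \<in> C" using zL by (simp add: C_def)
      have fH: "field d a x z' \<le> H" using True z'Z unfolding Bev_def by blast
      have "h \<le> field d a ?my (take (length (z' @ [c])) (z' @ [c]))" using zg unfolding good_def by blast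
      then have "field d a ?my (z' @ [c]) \<ge> h" by simp
      also have "field d a ?my (z' @ [c]) = field d a ?my z' / real d + ?my (z' @ [c])"
        by (rule field_snoc)
      also have "field d a ?my z' = field d a x z'" using field_agree2[OF agr z'V] z'len by simp
      also have "?my (z' @ [c]) = y (z' @ [c])" by (rule merge_apply(2)[OF Jn_disj zL])
      finally have "h \<le> field d a x z' / real d + y (z' @ [c])" .
      moreover have "field d a x z' / real d \<le> H / real d" using fH d by (simp add: divide_right_mono)
      ultimately have "y (z' @ [c]) \<ge> ?t" by simp
      have "y \<notin> PiE (Lev d (Suc n)) B"
      proof
        assume "y \<in> PiE (Lev d (Suc n)) B"
        then have "y (z' @ [c]) \<in> B (z' @ [c])" using zL by (rule PiE_mem)
        then have "y (z' @ [c]) < ?t" using zC by (simp add: B_def)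
        then show False using \<open>y (z' @ [c]) \<ge> ?t\<close> by simp
      qed
      then show "y \<in> space ?L - PiE (Lev d (Suc n)) B" using yL by simp
    qed
    have "emeasure ?L (Pair x -` A) \<le> emeasure ?L (space ?L - PiE (Lev d (Suc n)) B)"
      by (rule emeasure_mono[OF sub]) (use Bs in auto)
    also have "\<dots> = ennreal (1 - ?q ^ card C)"
      using Bs by (simp add: L.emeasure_eq_measure L.prob_compl Bm)
    also have "\<dots> \<le> ennreal (1 - \<delta>)"
    proof (rule ennreal_leI)
      have "?q ^ ((d + 1) * N) \<le> ?q ^ card C" using qpos qle cardC by (intro power_decreasing) auto
      then show "1 - ?q ^ card C \<le> 1 - \<delta>" unfolding \<delta>_def by simp
    qed
    finally show ?thesis using xX by simp
  qed
  have "emeasure ?Q XS = emeasure (distr (?P \<Otimes>\<^sub>M ?L) ?Q ?m) XS" using Qeq by simp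
  also have "\<dots> = emeasure (?P \<Otimes>\<^sub>M ?L) A" unfolding A_def by (rule emeasure_distr[OF mm XSs])
  also have "\<dots> = (\<integral>\<^sup>+x. emeasure ?L (Pair x -` A) \<partial>?P)" by (rule L.emeasure_pair_measure_alt[OF As])
  also have "\<dots> \<le> (\<integral>\<^sup>+x. ennreal (1 - \<delta>) * indicator Xn x \<partial>?P)" by (rule nn_integral_mono) (rule pw)
  also have "\<dots> = ennreal (1 - \<delta>) * emeasure ?P Xn" by (rule nn_integral_cmult_indicator[OF Xns])
  also have "\<dots> \<le> ennreal (1 - \<delta>) * ennreal ((1 - \<delta>) ^ n)"
    using Suc.IH unfolding Xn_def by (rule mult_left_mono) simp
  also have "\<dots> = ennreal ((1 - \<delta>) ^ Suc n)" using dl by (simp add: ennreal_mult[symmetric])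
  finally show ?case unfolding XS_def .
qed

theorem lemma4p2:
  fixes d N :: nat and a H :: real
  assumes "d \<ge> 2" and "a \<ge> hstar d" and "H \<ge> hstar d" and "N \<ge> 1"
  shows "Pa_null d a (\<lambda>phi. eventA d phi \<and> eventC d H phi \<and> eventD d N phi)"
proof -
  have d: "d > 0" using assms(1) by simp
  define h where "h = hstar d"
  define I where "I = Vert d - {root}"
  define \<delta> where "\<delta> = measure (Mn d) {..<h - H / real d} ^ ((d + 1) * N)"
  define X where "X n = {x \<in> space (PiM (Jn d n) (\<lambda>_. Mn d)). Bev d a h H N n x}" for n
  define G where "G n = prod_emb I (\<lambda>_. Mn d) (Jn d n) (X n)" for n
  have Y: "Yspace d = PiM I (\<lambda>_. Mn d)" unfolding Yspace_def Mn_def I_def ..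
  interpret Mnp: prob_space "Mn d" by (rule prob_Mn[OF d])
  interpret PP: product_prob_space "\<lambda>_::nat list. Mn d" I
    by unfold_locales
  have JI: "Jn d n \<subseteq> I" for n using Jn_sub unfolding I_def .
  have Xs: "X n \<in> sets (PiM (Jn d n) (\<lambda>_. Mn d))" for n unfolding X_def by (rule Bev_sets)
  have Gs: "G n \<in> sets (PiM I (\<lambda>_. Mn d))" for n unfolding G_def using JI Xs by simp
  have Gm: "emeasure (PiM I (\<lambda>_. Mn d)) (G n) \<le> ennreal ((1 - \<delta>) ^ n)" for n
  proof -
    have "emeasure (PiM I (\<lambda>_. Mn d)) (G n) = emeasure (PiM (Jn d n) (\<lambda>_. Mn d)) (X n)"
      unfolding G_def by (rule PP.emeasure_PiM_emb'[OF JI finite_Jn Xs])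
    also have "\<dots> \<le> ennreal ((1 - \<delta>) ^ n)" unfolding X_def \<delta>_def by (rule X_bound[OF d])
    finally show ?thesis .
  qed
  define G0 where "G0 = (\<Inter>n. G n)"
  have G0s: "G0 \<in> sets (PiM I (\<lambda>_. Mn d))" unfolding G0_def using Gs by auto
  have sig: "sqrt ((real d + 1) / real d) > 0" using d by simp
  have qpos: "measure (Mn d) {..<h - H / real d} > 0" unfolding Mn_def by (rule q_pos[OF sig])
  have qle: "measure (Mn d) {..<h - H / real d} \<le> 1" by (rule Mnp.prob_le_1)
  have dl: "0 < \<delta>" "\<delta> \<le> 1" unfolding \<delta>_def using qpos qle by (auto intro: power_le_one)
  have G0m: "PP.prob G0 \<le> (1 - \<delta>) ^ n" for n
  proof -
    have "emeasure (PiM I (\<lambda>_. Mn d)) G0 \<le> emeasure (PiM I (\<lambda>_. Mn d)) (G n)"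
      by (rule emeasure_mono) (use Gs in \<open>auto simp: G0_def\<close>)
    also have "\<dots> \<le> ennreal ((1 - \<delta>) ^ n)" by (rule Gm)
    finally show ?thesis using dl by (simp add: PP.emeasure_eq_measure)
  qed
  have lim: "(\<lambda>n. (1 - \<delta>) ^ n) \<longlonglongrightarrow> 0" using dl by (intro LIMSEQ_power_zero) auto
  have "PP.prob G0 \<le> 0" by (rule LIMSEQ_le_const[OF lim]) (use G0m in auto)
  then have "emeasure (PiM I (\<lambda>_. Mn d)) G0 = 0" using measure_nonneg[of "PiM I (\<lambda>_. Mn d)" G0] by (simp add: PP.emeasure_eq_measure)
  then have G0n: "G0 \<in> null_sets (PiM I (\<lambda>_. Mn d))" using G0s by auto
  have sub: "{Y \<in> space (Yspace d). eventA d (field d a Y) \<and> eventC d H (field d a Y) \<and> eventD d N (field d a Y)} \<subseteq> G0"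
  proof
    fix Y assume "Y \<in> {Y \<in> space (Yspace d). eventA d (field d a Y) \<and> eventC d H (field d a Y) \<and> eventD d N (field d a Y)}"
    then have YS: "Y \<in> space (PiM I (\<lambda>_. Mn d))" and ev: "eventA d (field d a Y)" "eventC d H (field d a Y)" "eventD d N (field d a Y)"
      using Y by auto
    show "Y \<in> G0" unfolding G0_def
    proof
      fix n
      have B: "Bev d a h H N n Y" unfolding h_def by (rule events_Bev[OF ev])
      have agr: "agree d n (restrict Y (Jn d n)) Y" unfolding agree_def by (auto simp: Jn_def)
      have "Bev d a h H N n (restrict Y (Jn d n))" using Bev_agree[OF agr le_refl] B by simp
      moreover have "restrict Y (Jn d n) \<in> space (PiM (Jn d n) (\<lambda>_. Mn d))"
        using YS JI[of n] by (auto simp: space_PiM)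
      ultimately have "restrict Y (Jn d n) \<in> X n" by (simp add: X_def)
      then show "Y \<in> G n" using YS unfolding G_def prod_emb_def by (auto simp: space_PiM)
    qed
  qed
  show ?thesis unfolding Pa_null_def
    by (rule null_sets_completion_subset[OF sub]) (use G0n Y in \<open>auto intro: null_sets_completionI\<close>)
qed

end
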